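(* Let $\beta,\gamma,\delta\in\mathbb{R}$ be nonzero and let $A=\begin{pmatrix}0&\beta\\\gamma&\delta\end{pmatrix}$ or $A=\begin{pmatrix}\delta&\gamma\\\beta&0\end{pmatrix}$. Then $A$ is a Karamardian matrix if and only if $\gamma<0$, $\beta>0$ and $\delta>0$.
   Context: For $M\in\mathbb{R}^{n\times n}$ let $K_M=\mathbb{R}^n_+\cap R(M)$ and $K_M^*=\{y: x^Ty\ge 0\ \forall x\in K_M\}$ (one has $K_M^*=\mathbb{R}^n_++N(M^T)$, with interior $\{a+b: a>0,\ b\in N(M^T)\}$); for invertible $M$, $K_M=K_M^*=\mathbb{R}^n_+$. For $q$, LCP$(M,K_M,q)$ is to find $x\in K_M$ with $Mx+q\in K_M^*$ and $x^T(Mx+q)=0$. $M$ is a Karamardian matrix if $K_M\ne\{0\}$ and there exists $d$ in the interior of $K_M^*$ such that both LCP$(M,K_M,0)$ and LCP$(M,K_M,d)$ have $x=0$ as their only solution. *)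

theory Defs
  imports "HOL-Analysis.Analysis"
begin

definition nonneg_orthant :: "(real^'n::finite) set" where
  "nonneg_orthant = {x. \<forall>i. 0 \<le> x $ i}"

definition K_cone :: "real^'n^'n::finite \<Rightarrow> (real^'n) set" where
  "K_cone M = nonneg_orthant \<inter> range (\<lambda>x. M *v x)"

definition dual_cone :: "(real^'n::finite) set \<Rightarrow> (real^'n) set" where
  "dual_cone K = {y. \<forall>x\<in>K. 0 \<le> x \<bullet> y}"

definition LCP_sol :: "real^'n^'n::finite \<Rightarrow> (real^'n) set \<Rightarrow> real^'n \<Rightarrow> (real^'n) set" where
  "LCP_sol M K q = {x. x \<in> K \<and> M *v x + q \<in> dual_cone K \<and> x \<bullet> (M *v x + q) = 0}"

definition karamardian :: "real^'n^'n::finite \<Rightarrow> bool" where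
  "karamardian M \<longleftrightarrow> K_cone M \<noteq> {0} \<and>
     (\<exists>d \<in> interior (dual_cone (K_cone M)).
        LCP_sol M (K_cone M) 0 = {0} \<and> LCP_sol M (K_cone M) d = {0})"

end

theory Submission
  imports Defs
begin

lemma K_inv: fixes A :: "real^'n^'n::finite" assumes "det A \<noteq> 0"
  shows "K_cone A = nonneg_orthant"
proof -
  have "invertible A" using assms invertible_det_nz by blast
  then obtain B where "A ** B = mat 1" unfolding invertible_def by blast
  then have "\<And>y. A *v (B *v y) = y" by (simp add: matrix_vector_mul_assoc)
  then have "range (\<lambda>x. A *v x) = UNIV" by (metis surj_def)
  thus ?thesis unfolding K_cone_def by simp
qed

lemma dual_orth: "dual_cone (nonneg_orthant :: (real^'n::finite) set) = nonneg_orthant"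
proof
  show "dual_cone nonneg_orthant \<subseteq> (nonneg_orthant :: (real^'n) set)"
  proof
    fix y :: "real^'n" assume y: "y \<in> dual_cone nonneg_orthant"
    have "0 \<le> y $ i" for i
    proof -
      have "axis i 1 \<in> (nonneg_orthant :: (real^'n) set)"
        by (simp add: nonneg_orthant_def axis_def)
      then have "0 \<le> axis i 1 \<bullet> y" using y unfolding dual_cone_def by blast
      thus ?thesis by (simp add: inner_axis')
    qed
    thus "y \<in> nonneg_orthant" by (simp add: nonneg_orthant_def)
  qed
next
  show "nonneg_orthant \<subseteq> dual_cone (nonneg_orthant :: (real^'n) set)"
    unfolding dual_cone_def nonneg_orthant_def inner_vec_def
    by (auto intro!: sum_nonneg)
qed

lemma int_orth_pos: fixes d :: "real^'n::finite"
  assumes "d \<in> interior nonneg_orthant" shows "0 < d $ i"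
proof -
  obtain e where e: "e > 0" "ball d e \<subseteq> nonneg_orthant"
    using assms by (meson mem_interior)
  have "d - (e/2) *\<^sub>R axis i 1 \<in> ball d e" using e by (simp add: dist_norm)
  then have "0 \<le> (d - (e/2) *\<^sub>R axis i 1) $ i" using e unfolding nonneg_orthant_def by blast
  thus ?thesis using e by simp
qed

lemma one_int: "(\<chi> i. (1::real)) \<in> interior (nonneg_orthant :: (real^'n::finite) set)"
proof -
  have "ball (\<chi> i. (1::real)) 1 \<subseteq> (nonneg_orthant :: (real^'n) set)"
  proof
    fix y :: "real^'n" assume "y \<in> ball (\<chi> i. 1) 1"
    then have n: "norm ((\<chi> i. 1) - y) < 1" by (simp add: dist_norm)
    have "0 \<le> y $ i" for i
      using component_le_norm_cart[of "(\<chi> i. 1) - y" i] n by simp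
    thus "y \<in> nonneg_orthant" by (simp add: nonneg_orthant_def)
  qed
  thus ?thesis by (meson interior_maximal open_ball centre_in_ball zero_less_one subsetD)
qed


lemma kar_imp: fixes A :: "real^'n^'n::finite" assumes "det A \<noteq> 0" "karamardian A"
  shows "(\<forall>x. x\<in>nonneg_orthant \<and> A *v x \<in> nonneg_orthant \<and> x \<bullet> (A *v x) = 0 \<longrightarrow> x = 0)
    \<and> (\<exists>d. (\<forall>i. 0 < d$i) \<and> (\<forall>x. x\<in>nonneg_orthant \<and> A *v x + d \<in> nonneg_orthant \<and> x \<bullet> (A *v x + d) = 0 \<longrightarrow> x = 0))"
proof -
  have K: "K_cone A = nonneg_orthant" using K_inv assms(1) .
  obtain d where d: "d \<in> interior nonneg_orthant" "LCP_sol A nonneg_orthant 0 = {0}"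
    "LCP_sol A nonneg_orthant d = {0}"
    using assms(2) unfolding karamardian_def K dual_orth by auto
  show ?thesis
  proof (intro conjI exI[of _ d] allI impI)
    fix x assume "x\<in>nonneg_orthant \<and> A *v x \<in> nonneg_orthant \<and> x \<bullet> (A *v x) = 0"
    then have "x \<in> LCP_sol A nonneg_orthant 0" unfolding LCP_sol_def dual_orth by simp
    then show "x = 0" using d by auto
  next
    fix i show "0 < d$i" using int_orth_pos d(1) by blast
  next
    fix x assume "x\<in>nonneg_orthant \<and> A *v x + d \<in> nonneg_orthant \<and> x \<bullet> (A *v x + d) = 0"
    then have "x \<in> LCP_sol A nonneg_orthant d" unfolding LCP_sol_def dual_orth by simp
    then show "x = 0" using d by auto
  qed
qed

lemma imp_kar: fixes A :: "real^'n^'n::finite" assumes "det A \<noteq> 0"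
  and "\<forall>x. x\<in>nonneg_orthant \<and> A *v x \<in> nonneg_orthant \<and> x \<bullet> (A *v x) = 0 \<longrightarrow> x = 0"
  and "\<forall>x. x\<in>nonneg_orthant \<and> A *v x + (\<chi> i. 1) \<in> nonneg_orthant \<and> x \<bullet> (A *v x + (\<chi> i. 1)) = 0 \<longrightarrow> x = 0"
  shows "karamardian A"
proof -
  have K: "K_cone A = nonneg_orthant" using K_inv assms(1) .
  have ne: "(\<chi> i. (1::real)) \<in> (nonneg_orthant :: (real^'n) set)" by (simp add: nonneg_orthant_def)
  have "(\<chi> i. (1::real)) \<noteq> 0" by (simp add: vec_eq_iff)
  then have "nonneg_orthant \<noteq> {0::real^'n}" using ne by blast
  moreover have "LCP_sol A nonneg_orthant 0 = {0}"
    using assms(2) unfolding LCP_sol_def dual_orth by (auto simp: nonneg_orthant_def)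
  moreover have "LCP_sol A nonneg_orthant (\<chi> i. 1) = {0}"
    using assms(3) ne unfolding LCP_sol_def dual_orth by (auto simp: nonneg_orthant_def)
  ultimately show ?thesis unfolding karamardian_def K dual_orth using one_int by blast
qed

lemma L0: fixes \<beta> \<gamma> \<delta> :: real assumes "\<gamma> \<noteq> 0"
  and "\<forall>a b. a\<ge>0 \<and> b\<ge>0 \<and> \<beta>*b\<ge>0 \<and> \<gamma>*a+\<delta>*b\<ge>0 \<and> a*(\<beta>*b)+b*(\<gamma>*a+\<delta>*b)=0 \<longrightarrow> a=0\<and>b=0"
  shows "\<gamma> < 0"
proof (rule ccontr)
  assume "\<not> \<gamma> < 0" then have "\<gamma> > 0" using assms(1) by simp
  then show False using assms(2)[rule_format, of 1 0] by simp
qed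

lemma Ld: fixes \<beta> \<gamma> \<delta> d1 d2 :: real assumes "\<gamma> < 0" "\<beta> \<noteq> 0" "\<delta> \<noteq> 0" "d1 > 0" "d2 > 0"
  and H: "\<forall>a b. a\<ge>0 \<and> b\<ge>0 \<and> \<beta>*b+d1\<ge>0 \<and> \<gamma>*a+\<delta>*b+d2\<ge>0 \<and> a*(\<beta>*b+d1)+b*(\<gamma>*a+\<delta>*b+d2)=0 \<longrightarrow> a=0\<and>b=0"
  shows "\<beta> > 0 \<and> \<delta> > 0"
proof (rule ccontr)
  assume nb: "\<not> (\<beta> > 0 \<and> \<delta> > 0)"
  define b0 where "b0 = -d2/\<delta>"
  define b1 where "b1 = -d1/\<beta>"
  have db0: "\<delta>*b0 = -d2" using assms(3) by (simp add: b0_def)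
  have db1: "\<beta>*b1 = -d1" using assms(2) by (simp add: b1_def)
  show False
  proof (cases "\<delta> < 0 \<and> \<beta>*b0+d1 \<ge> 0")
    case True
    have "b0 > 0" using True assms(5) by (simp add: b0_def divide_pos_neg)
    moreover have "0 \<le> (0::real) \<and> b0\<ge>0 \<and> \<beta>*b0+d1\<ge>0 \<and> \<gamma>*0+\<delta>*b0+d2\<ge>0 \<and> 0*(\<beta>*b0+d1)+b0*(\<gamma>*0+\<delta>*b0+d2)=0"
      using True \<open>b0 > 0\<close> db0 by simp
    ultimately show False using H[rule_format, of 0 b0] by simp
  next
    case False
    have bneg: "\<beta> < 0"
    proof (rule ccontr)
      assume "\<not> \<beta> < 0" then have "\<beta> > 0" using assms(2) by simp
      then have "\<delta> < 0" using nb assms(3) by simp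
      then have "b0 > 0" using assms(5) by (simp add: b0_def divide_pos_neg)
      then have "\<beta>*b0 \<ge> 0" using \<open>\<beta> > 0\<close> by simp
      then show False using False \<open>\<delta> < 0\<close> assms(4) by simp
    qed
    have b1p: "b1 > 0" using bneg assms(4) by (simp add: b1_def divide_pos_neg)
    have key: "\<delta>*b1 + d2 \<ge> 0"
    proof (cases "\<delta> > 0")
      case True then show ?thesis using b1p assms(5) by (simp add: add_nonneg_nonneg)
    next
      case dF: False
      then have dn: "\<delta> < 0" using assms(3) by simp
      then have "\<beta>*b0 + d1 < 0" using False by simp
      then have "\<beta>*b0 < \<beta>*b1" using db1 by simp
      then have "b1 < b0" using bneg by (simp add: mult_less_cancel_left)
      then have "\<delta>*b0 \<le> \<delta>*b1" using dn by (simp add: mult_left_mono_neg)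
      then show ?thesis using db0 by simp
    qed
    define a where "a = -(\<delta>*b1+d2)/\<gamma>"
    have ga: "\<gamma>*a = -(\<delta>*b1+d2)" using assms(1) by (simp add: a_def)
    have a0: "a \<ge> 0" using key assms(1) by (simp add: a_def divide_nonpos_neg)
    have "a\<ge>0 \<and> b1\<ge>0 \<and> \<beta>*b1+d1\<ge>0 \<and> \<gamma>*a+\<delta>*b1+d2\<ge>0 \<and> a*(\<beta>*b1+d1)+b1*(\<gamma>*a+\<delta>*b1+d2)=0"
      using a0 b1p db1 ga by simp
    then show False using H[rule_format, of a b1] b1p by simp
  qed
qed

lemma S0: fixes \<beta> \<gamma> \<delta> :: real assumes "\<gamma> < 0" "\<beta> > 0" "\<delta> > 0"
  shows "\<forall>a b. a\<ge>0 \<and> b\<ge>0 \<and> \<beta>*b\<ge>0 \<and> \<gamma>*a+\<delta>*b\<ge>0 \<and> a*(\<beta>*b)+b*(\<gamma>*a+\<delta>*b)=0 \<longrightarrow> a=0\<and>b=0"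
proof (intro allI impI)
  fix a b :: real
  assume h: "a\<ge>0 \<and> b\<ge>0 \<and> \<beta>*b\<ge>0 \<and> \<gamma>*a+\<delta>*b\<ge>0 \<and> a*(\<beta>*b)+b*(\<gamma>*a+\<delta>*b)=0"
  have t1: "a*(\<beta>*b) \<ge> 0" using h assms by simp
  have t2: "b*(\<gamma>*a+\<delta>*b) \<ge> 0" using h by simp
  have e1: "a*(\<beta>*b) = 0" and e2: "b*(\<gamma>*a+\<delta>*b) = 0" using t1 t2 h by linarith+
  have b0: "b = 0"
  proof (rule ccontr)
    assume "b \<noteq> 0"
    then have "a = 0" using e1 assms by simp
    then have "b*(\<delta>*b) = 0" using e2 by simp
    then show False using \<open>b \<noteq> 0\<close> assms by simp
  qed
  then have "\<gamma>*a \<ge> 0" using h by simp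
  moreover have "\<gamma>*a \<le> 0" using h assms by (simp add: mult_nonpos_nonneg)
  ultimately have "\<gamma>*a = 0" by simp
  then show "a=0 \<and> b=0" using b0 assms by simp
qed

lemma S1: fixes \<beta> \<gamma> \<delta> :: real assumes "\<gamma> < 0" "\<beta> > 0" "\<delta> > 0"
  shows "\<forall>a b. a\<ge>0 \<and> b\<ge>0 \<and> \<beta>*b+1\<ge>0 \<and> \<gamma>*a+\<delta>*b+1\<ge>0 \<and> a*(\<beta>*b+1)+b*(\<gamma>*a+\<delta>*b+1)=0 \<longrightarrow> a=0\<and>b=0"
proof (intro allI impI)
  fix a b :: real
  assume h: "a\<ge>0 \<and> b\<ge>0 \<and> \<beta>*b+1\<ge>0 \<and> \<gamma>*a+\<delta>*b+1\<ge>0 \<and> a*(\<beta>*b+1)+b*(\<gamma>*a+\<delta>*b+1)=0"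
  have "\<beta>*b \<ge> 0" using h assms by simp
  then have p: "\<beta>*b+1 > 0" by linarith
  have t1: "a*(\<beta>*b+1) \<ge> 0" using h p by simp
  have t2: "b*(\<gamma>*a+\<delta>*b+1) \<ge> 0" using h by simp
  have e1: "a*(\<beta>*b+1) = 0" and e2: "b*(\<gamma>*a+\<delta>*b+1) = 0" using t1 t2 h by linarith+
  then have a0: "a = 0" using p by simp
  have "\<delta>*b \<ge> 0" using h assms by simp
  then have "\<delta>*b+1 > 0" by linarith
  then have "b = 0" using e2 a0 by simp
  then show "a=0 \<and> b=0" using a0 by simp
qed


lemma orth2: "(x::real^2) \<in> nonneg_orthant \<longleftrightarrow> 0 \<le> x$1 \<and> 0 \<le> x$2"
  by (simp add: nonneg_orthant_def forall_2)
lemma inner2: "(x::real^2) \<bullet> y = x$1*y$1 + x$2*y$2"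
  by (simp add: inner_vec_def sum_2)
lemma zero2: "(x::real^2) = 0 \<longleftrightarrow> x$1 = 0 \<and> x$2 = 0"
  by (simp add: vec_eq_iff forall_2)
lemma mv2: "((A::real^2^2) *v x)$1 = A$1$1*x$1 + A$1$2*x$2" "(A *v x)$2 = A$2$1*x$1 + A$2$2*x$2"
  by (simp_all add: matrix_vector_mult_def sum_2)

lemma case1: fixes \<beta> \<gamma> \<delta> :: real and A :: "real^2^2"
  assumes "\<beta> \<noteq> 0" and "\<gamma> \<noteq> 0" and "\<delta> \<noteq> 0"
    and e: "A$1$1 = 0" "A$1$2 = \<beta>" "A$2$1 = \<gamma>" "A$2$2 = \<delta>"
  shows "karamardian A \<longleftrightarrow> \<gamma> < 0 \<and> \<beta> > 0 \<and> \<delta> > 0"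
proof -
  have dt: "det A \<noteq> 0" using assms by (simp add: det_2)
  have c: "\<And>x. (A *v x)$1 = \<beta>*x$2" "\<And>x. (A *v x)$2 = \<gamma>*x$1+\<delta>*x$2"
    using e by (simp_all add: mv2)
  show ?thesis
  proof
    assume k: "karamardian A"
    from kar_imp[OF dt k] obtain d where
      P0: "\<forall>x. x\<in>nonneg_orthant \<and> A *v x \<in> nonneg_orthant \<and> x \<bullet> (A *v x) = 0 \<longrightarrow> x = 0"
      and dp: "\<forall>i. 0 < d$i"
      and P: "\<forall>x. x\<in>nonneg_orthant \<and> A *v x + d \<in> nonneg_orthant \<and> x \<bullet> (A *v x + d) = 0 \<longrightarrow> x = 0"
      by blast
    have R0: "\<forall>a b. a\<ge>0 \<and> b\<ge>0 \<and> \<beta>*b\<ge>0 \<and> \<gamma>*a+\<delta>*b\<ge>0 \<and> a*(\<beta>*b)+b*(\<gamma>*a+\<delta>*b)=0 \<longrightarrow> a=0\<and>b=0"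
    proof (intro allI impI)
      fix a b :: real assume h: "a\<ge>0 \<and> b\<ge>0 \<and> \<beta>*b\<ge>0 \<and> \<gamma>*a+\<delta>*b\<ge>0 \<and> a*(\<beta>*b)+b*(\<gamma>*a+\<delta>*b)=0"
      have "(vector [a,b] :: real^2) = 0"
        using P0[rule_format, of "vector [a,b]"] h by (simp add: orth2 inner2 c)
      then show "a=0 \<and> b=0" by (simp add: zero2)
    qed
    have g: "\<gamma> < 0" using L0[OF assms(2) R0] .
    have R1: "\<forall>a b. a\<ge>0 \<and> b\<ge>0 \<and> \<beta>*b+d$1\<ge>0 \<and> \<gamma>*a+\<delta>*b+d$2\<ge>0 \<and> a*(\<beta>*b+d$1)+b*(\<gamma>*a+\<delta>*b+d$2)=0 \<longrightarrow> a=0\<and>b=0"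
    proof (intro allI impI)
      fix a b :: real assume h: "a\<ge>0 \<and> b\<ge>0 \<and> \<beta>*b+d$1\<ge>0 \<and> \<gamma>*a+\<delta>*b+d$2\<ge>0 \<and> a*(\<beta>*b+d$1)+b*(\<gamma>*a+\<delta>*b+d$2)=0"
      have "(vector [a,b] :: real^2) = 0"
        using P[rule_format, of "vector [a,b]"] h by (simp add: orth2 inner2 c)
      then show "a=0 \<and> b=0" by (simp add: zero2)
    qed
    have "\<beta> > 0 \<and> \<delta> > 0" using Ld[OF g assms(1) assms(3) _ _ R1] dp by blast
    then show "\<gamma> < 0 \<and> \<beta> > 0 \<and> \<delta> > 0" using g by simp
  next
    assume h: "\<gamma> < 0 \<and> \<beta> > 0 \<and> \<delta> > 0"
    note R0 = S0[of \<gamma> \<beta> \<delta>] and R1 = S1[of \<gamma> \<beta> \<delta>]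
    show "karamardian A"
    proof (rule imp_kar[OF dt])
      show "\<forall>x. x\<in>nonneg_orthant \<and> A *v x \<in> nonneg_orthant \<and> x \<bullet> (A *v x) = 0 \<longrightarrow> x = 0"
      proof (intro allI impI)
        fix x :: "real^2" assume hx: "x\<in>nonneg_orthant \<and> A *v x \<in> nonneg_orthant \<and> x \<bullet> (A *v x) = 0"
        have "x$1 = 0 \<and> x$2 = 0"
          using R0[OF conjunct1[OF h] conjunct1[OF conjunct2[OF h]] conjunct2[OF conjunct2[OF h]], rule_format, of "x$1" "x$2"] hx
          by (simp add: orth2 inner2 c)
        then show "x = 0" by (simp add: zero2)
      qed
      show "\<forall>x. x\<in>nonneg_orthant \<and> A *v x + (\<chi> i. 1) \<in> nonneg_orthant \<and> x \<bullet> (A *v x + (\<chi> i. 1)) = 0 \<longrightarrow> x = 0"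
      proof (intro allI impI)
        fix x :: "real^2" assume hx: "x\<in>nonneg_orthant \<and> A *v x + (\<chi> i. 1) \<in> nonneg_orthant \<and> x \<bullet> (A *v x + (\<chi> i. 1)) = 0"
        have "x$1 = 0 \<and> x$2 = 0"
          using R1[OF conjunct1[OF h] conjunct1[OF conjunct2[OF h]] conjunct2[OF conjunct2[OF h]], rule_format, of "x$1" "x$2"] hx
          by (simp add: orth2 inner2 c)
        then show "x = 0" by (simp add: zero2)
      qed
    qed
  qed
qed

lemma case2: fixes \<beta> \<gamma> \<delta> :: real and A :: "real^2^2"
  assumes "\<beta> \<noteq> 0" and "\<gamma> \<noteq> 0" and "\<delta> \<noteq> 0"
    and e: "A$1$1 = \<delta>" "A$1$2 = \<gamma>" "A$2$1 = \<beta>" "A$2$2 = 0"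
  shows "karamardian A \<longleftrightarrow> \<gamma> < 0 \<and> \<beta> > 0 \<and> \<delta> > 0"
proof -
  have dt: "det A \<noteq> 0" using assms by (simp add: det_2)
  have c: "\<And>x. (A *v x)$1 = \<gamma>*x$2+\<delta>*x$1" "\<And>x. (A *v x)$2 = \<beta>*x$1"
    using e by (simp_all add: mv2)
  show ?thesis
  proof
    assume k: "karamardian A"
    from kar_imp[OF dt k] obtain d where
      P0: "\<forall>x. x\<in>nonneg_orthant \<and> A *v x \<in> nonneg_orthant \<and> x \<bullet> (A *v x) = 0 \<longrightarrow> x = 0"
      and dp: "\<forall>i. 0 < d$i"
      and P: "\<forall>x. x\<in>nonneg_orthant \<and> A *v x + d \<in> nonneg_orthant \<and> x \<bullet> (A *v x + d) = 0 \<longrightarrow> x = 0"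
      by blast
    have R0: "\<forall>a b. a\<ge>0 \<and> b\<ge>0 \<and> \<beta>*b\<ge>0 \<and> \<gamma>*a+\<delta>*b\<ge>0 \<and> a*(\<beta>*b)+b*(\<gamma>*a+\<delta>*b)=0 \<longrightarrow> a=0\<and>b=0"
    proof (intro allI impI)
      fix a b :: real assume h: "a\<ge>0 \<and> b\<ge>0 \<and> \<beta>*b\<ge>0 \<and> \<gamma>*a+\<delta>*b\<ge>0 \<and> a*(\<beta>*b)+b*(\<gamma>*a+\<delta>*b)=0"
      have "(vector [b,a] :: real^2) = 0"
        using P0[rule_format, of "vector [b,a]"] h by (simp add: orth2 inner2 c add.commute)
      then show "a=0 \<and> b=0" by (simp add: zero2)
    qed
    have g: "\<gamma> < 0" using L0[OF assms(2) R0] .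
    have R1: "\<forall>a b. a\<ge>0 \<and> b\<ge>0 \<and> \<beta>*b+d$2\<ge>0 \<and> \<gamma>*a+\<delta>*b+d$1\<ge>0 \<and> a*(\<beta>*b+d$2)+b*(\<gamma>*a+\<delta>*b+d$1)=0 \<longrightarrow> a=0\<and>b=0"
    proof (intro allI impI)
      fix a b :: real assume h: "a\<ge>0 \<and> b\<ge>0 \<and> \<beta>*b+d$2\<ge>0 \<and> \<gamma>*a+\<delta>*b+d$1\<ge>0 \<and> a*(\<beta>*b+d$2)+b*(\<gamma>*a+\<delta>*b+d$1)=0"
      have "(vector [b,a] :: real^2) = 0"
        using P[rule_format, of "vector [b,a]"] h by (simp add: orth2 inner2 c add.commute)
      then show "a=0 \<and> b=0" by (simp add: zero2)
    qed
    have "\<beta> > 0 \<and> \<delta> > 0" using Ld[OF g assms(1) assms(3) _ _ R1] dp by blast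
    then show "\<gamma> < 0 \<and> \<beta> > 0 \<and> \<delta> > 0" using g by simp
  next
    assume h: "\<gamma> < 0 \<and> \<beta> > 0 \<and> \<delta> > 0"
    note R0 = S0[of \<gamma> \<beta> \<delta>] and R1 = S1[of \<gamma> \<beta> \<delta>]
    show "karamardian A"
    proof (rule imp_kar[OF dt])
      show "\<forall>x. x\<in>nonneg_orthant \<and> A *v x \<in> nonneg_orthant \<and> x \<bullet> (A *v x) = 0 \<longrightarrow> x = 0"
      proof (intro allI impI)
        fix x :: "real^2" assume hx: "x\<in>nonneg_orthant \<and> A *v x \<in> nonneg_orthant \<and> x \<bullet> (A *v x) = 0"
        have "x$2 = 0 \<and> x$1 = 0"
          using R0[OF conjunct1[OF h] conjunct1[OF conjunct2[OF h]] conjunct2[OF conjunct2[OF h]], rule_format, of "x$2" "x$1"] hx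
          by (simp add: orth2 inner2 c add.commute)
        then show "x = 0" by (simp add: zero2)
      qed
      show "\<forall>x. x\<in>nonneg_orthant \<and> A *v x + (\<chi> i. 1) \<in> nonneg_orthant \<and> x \<bullet> (A *v x + (\<chi> i. 1)) = 0 \<longrightarrow> x = 0"
      proof (intro allI impI)
        fix x :: "real^2" assume hx: "x\<in>nonneg_orthant \<and> A *v x + (\<chi> i. 1) \<in> nonneg_orthant \<and> x \<bullet> (A *v x + (\<chi> i. 1)) = 0"
        have "x$2 = 0 \<and> x$1 = 0"
          using R1[OF conjunct1[OF h] conjunct1[OF conjunct2[OF h]] conjunct2[OF conjunct2[OF h]], rule_format, of "x$2" "x$1"] hx
          by (simp add: orth2 inner2 c add.commute)
        then show "x = 0" by (simp add: zero2)
      qed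
    qed
  qed
qed


theorem mainTheorem20:
  fixes \<beta> \<gamma> \<delta> :: real and A :: "real^2^2"
  assumes "\<beta> \<noteq> 0" and "\<gamma> \<noteq> 0" and "\<delta> \<noteq> 0"
    and "A = vector [vector [0, \<beta>], vector [\<gamma>, \<delta>]] \<or>
         A = vector [vector [\<delta>, \<gamma>], vector [\<beta>, 0]]"
  shows "karamardian A \<longleftrightarrow> \<gamma> < 0 \<and> \<beta> > 0 \<and> \<delta> > 0"
  using assms(4)
proof
  assume "A = vector [vector [0, \<beta>], vector [\<gamma>, \<delta>]]"
  then show ?thesis using case1[OF assms(1-3)] by simp
next
  assume "A = vector [vector [\<delta>, \<gamma>], vector [\<beta>, 0]]"
  then show ?thesis using case2[OF assms(1-3)] by simp
qed

end
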